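(* Let $\mathcal{R}$ be a commutative ring with unity, $P$ a locally finite poset and $b$ an additive biderivation of $I(P,\mathcal{R})$. Let $x\le y$ and $u\le v$ in $P$. If at least one pair of elements among $\{x,y,u,v\}$ is not comparable, then $b(r_1e_{xy},r_2e_{uv})=0$ for all $r_1,r_2\in\mathcal{R}$.
   Context: $I(P,\mathcal{R})$ is the incidence algebra: functions $f:P\times P\to\mathcal{R}$ with $f(x,y)=0$ unless $x\le y$, with product $(fg)(x,y)=\sum_{x\le z\le y}f(x,z)g(z,y)$; $e_{xy}$ ($x\le y$) is the function equal to $1$ at $(x,y)$ and $0$ elsewhere. An additive biderivation is a map $b$ of two arguments, additive in each, with $b(\alpha\beta,\gamma)=\alpha b(\beta,\gamma)+b(\alpha,\gamma)\beta$ and $b(\alpha,\beta\gamma)=\beta b(\alpha,\gamma)+b(\alpha,\beta)\gamma$. *)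

theory Defs
  imports Main
begin

definition locally_finite_poset :: "'p::order itself \<Rightarrow> bool" where
  "locally_finite_poset _ \<longleftrightarrow> (\<forall>x y::'p. finite {x..y})"

definition incidence :: "('p::order \<Rightarrow> 'p \<Rightarrow> 'r::comm_ring_1) set" where
  "incidence = {f. \<forall>x y. \<not> x \<le> y \<longrightarrow> f x y = 0}"

definition inc_mult :: "('p::order \<Rightarrow> 'p \<Rightarrow> 'r::comm_ring_1) \<Rightarrow> ('p \<Rightarrow> 'p \<Rightarrow> 'r) \<Rightarrow> ('p \<Rightarrow> 'p \<Rightarrow> 'r)" where
  "inc_mult f g = (\<lambda>x y. \<Sum>z\<in>{x..y}. f x z * g z y)"

definition inc_add :: "('p \<Rightarrow> 'p \<Rightarrow> 'r::comm_ring_1) \<Rightarrow> ('p \<Rightarrow> 'p \<Rightarrow> 'r) \<Rightarrow> ('p \<Rightarrow> 'p \<Rightarrow> 'r)" where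
  "inc_add f g = (\<lambda>x y. f x y + g x y)"

definition scaled_unit :: "'r::comm_ring_1 \<Rightarrow> 'p \<Rightarrow> 'p \<Rightarrow> ('p \<Rightarrow> 'p \<Rightarrow> 'r)" where
  "scaled_unit r x y = (\<lambda>a c. if a = x \<and> c = y then r else 0)"

definition additive_biderivation ::
  "(('p::order \<Rightarrow> 'p \<Rightarrow> 'r::comm_ring_1) \<Rightarrow> ('p \<Rightarrow> 'p \<Rightarrow> 'r) \<Rightarrow> ('p \<Rightarrow> 'p \<Rightarrow> 'r)) \<Rightarrow> bool" where
  "additive_biderivation b \<longleftrightarrow>
     (\<forall>\<alpha>\<in>incidence. \<forall>\<beta>\<in>incidence. b \<alpha> \<beta> \<in> incidence) \<and>
     (\<forall>\<alpha>\<in>incidence. \<forall>\<beta>\<in>incidence. \<forall>\<gamma>\<in>incidence.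
        b (inc_add \<alpha> \<beta>) \<gamma> = inc_add (b \<alpha> \<gamma>) (b \<beta> \<gamma>) \<and>
        b \<alpha> (inc_add \<beta> \<gamma>) = inc_add (b \<alpha> \<beta>) (b \<alpha> \<gamma>) \<and>
        b (inc_mult \<alpha> \<beta>) \<gamma> = inc_add (inc_mult \<alpha> (b \<beta> \<gamma>)) (inc_mult (b \<alpha> \<gamma>) \<beta>) \<and>
        b \<alpha> (inc_mult \<beta> \<gamma>) = inc_add (inc_mult \<beta> (b \<alpha> \<gamma>)) (inc_mult (b \<alpha> \<beta>) \<gamma>))"

end

theory Submission
  imports Defs
begin

lemma su_inc: "(a::'p::order) \<le> c \<Longrightarrow> scaled_unit r a c \<in> (incidence :: ('p \<Rightarrow> 'p \<Rightarrow> 'r::comm_ring_1) set)"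
  unfolding incidence_def scaled_unit_def by auto

lemma mult_su_left:
  assumes "finite {p..q}"
  shows "inc_mult (scaled_unit r a c) g p q = (if p = a \<and> c \<in> {p..q} then r * g c q else (0::'r::comm_ring_1))"
proof -
  have "inc_mult (scaled_unit r a c) g p q = (\<Sum>z\<in>{p..q}. if p = a then (if z = c then r * g c q else 0) else 0)"
    unfolding inc_mult_def scaled_unit_def by (intro sum.cong) auto
  also have "\<dots> = (if p = a \<and> c \<in> {p..q} then r * g c q else 0)"
    using assms by (cases "p = a") (simp_all add: sum.delta')
  finally show ?thesis .
qed

lemma mult_su_right:
  assumes "finite {p..q}"
  shows "inc_mult g (scaled_unit r a c) p q = (if q = c \<and> a \<in> {p..q} then g p a * r else (0::'r::comm_ring_1))"
proof -
  have "inc_mult g (scaled_unit r a c) p q = (\<Sum>z\<in>{p..q}. if q = c then (if z = a then g p a * r else 0) else 0)"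
    unfolding inc_mult_def scaled_unit_def by (intro sum.cong) auto
  also have "\<dots> = (if q = c \<and> a \<in> {p..q} then g p a * r else 0)"
    using assms by (cases "q = c") (simp_all add: sum.delta')
  finally show ?thesis .
qed

lemma su_left_id:
  assumes lf: "locally_finite_poset TYPE('p::order)" and "(a::'p) \<le> c"
  shows "inc_mult (scaled_unit 1 a a) (scaled_unit r a c) = (scaled_unit r a c :: 'p \<Rightarrow> 'p \<Rightarrow> 'r::comm_ring_1)"
proof (intro ext)
  fix p q :: 'p
  have f: "finite {p..q}" using lf unfolding locally_finite_poset_def by blast
  show "inc_mult (scaled_unit 1 a a) (scaled_unit r a c) p q = scaled_unit r a c p q"
    unfolding mult_su_left[OF f] using assms(2) by (auto simp: scaled_unit_def)
qed

lemma su_right_id: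
  assumes lf: "locally_finite_poset TYPE('p::order)" and "(a::'p) \<le> c"
  shows "inc_mult (scaled_unit r a c) (scaled_unit 1 c c) = (scaled_unit r a c :: 'p \<Rightarrow> 'p \<Rightarrow> 'r::comm_ring_1)"
proof (intro ext)
  fix p q :: 'p
  have f: "finite {p..q}" using lf unfolding locally_finite_poset_def by blast
  show "inc_mult (scaled_unit r a c) (scaled_unit 1 c c) p q = scaled_unit r a c p q"
    unfolding mult_su_right[OF f] using assms(2) by (auto simp: scaled_unit_def)
qed

context
  fixes b :: "('p::order \<Rightarrow> 'p \<Rightarrow> 'r::comm_ring_1) \<Rightarrow> ('p \<Rightarrow> 'p \<Rightarrow> 'r) \<Rightarrow> ('p \<Rightarrow> 'p \<Rightarrow> 'r)"
  assumes lf: "locally_finite_poset TYPE('p)" and bd: "additive_biderivation b"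
begin

lemma fin: "finite {p..q::'p}" using lf unfolding locally_finite_poset_def by blast

lemma R1:
  assumes "a \<le> c" "\<beta> \<in> incidence" "q \<noteq> c"
  shows "b (scaled_unit r a c) \<beta> p q = (if p = a \<and> c \<le> q then r * b (scaled_unit 1 c c) \<beta> c q else 0)"
proof -
  let ?A = "scaled_unit r a c" and ?E = "scaled_unit 1 c c"
  have "b ?A \<beta> = b (inc_mult ?A ?E) \<beta>" using su_right_id[OF lf assms(1), where r=r] by simp
  also have "\<dots> = inc_add (inc_mult ?A (b ?E \<beta>)) (inc_mult (b ?A \<beta>) ?E)"
    using bd assms su_inc[OF assms(1)] su_inc[of c c] unfolding additive_biderivation_def by blast
  finally have "b ?A \<beta> p q = inc_add (inc_mult ?A (b ?E \<beta>)) (inc_mult (b ?A \<beta>) ?E) p q" by simp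
  then show ?thesis using assms unfolding inc_add_def mult_su_left[OF fin] mult_su_right[OF fin] by auto
qed

lemma R2:
  assumes "a \<le> c" "\<beta> \<in> incidence" "p \<noteq> a"
  shows "b (scaled_unit r a c) \<beta> p q = (if q = c \<and> p \<le> a then b (scaled_unit 1 a a) \<beta> p a * r else 0)"
proof -
  let ?A = "scaled_unit r a c" and ?E = "scaled_unit 1 a a"
  have "b ?A \<beta> = b (inc_mult ?E ?A) \<beta>" using su_left_id[OF lf assms(1), where r=r] by simp
  also have "\<dots> = inc_add (inc_mult ?E (b ?A \<beta>)) (inc_mult (b ?E \<beta>) ?A)"
    using bd assms su_inc[OF assms(1)] su_inc[of a a] unfolding additive_biderivation_def by blast
  finally have "b ?A \<beta> p q = inc_add (inc_mult ?E (b ?A \<beta>)) (inc_mult (b ?E \<beta>) ?A) p q" by simp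
  then show ?thesis using assms unfolding inc_add_def mult_su_left[OF fin] mult_su_right[OF fin] by auto
qed

lemma R3:
  assumes "d \<le> g" "\<alpha> \<in> incidence" "q \<noteq> g"
  shows "b \<alpha> (scaled_unit s d g) p q = (if p = d \<and> g \<le> q then s * b \<alpha> (scaled_unit 1 g g) g q else 0)"
proof -
  let ?B = "scaled_unit s d g" and ?E = "scaled_unit 1 g g"
  have "b \<alpha> ?B = b \<alpha> (inc_mult ?B ?E)" using su_right_id[OF lf assms(1), where r=s] by simp
  also have "\<dots> = inc_add (inc_mult ?B (b \<alpha> ?E)) (inc_mult (b \<alpha> ?B) ?E)"
    using bd assms su_inc[OF assms(1)] su_inc[of g g] unfolding additive_biderivation_def by blast
  finally have "b \<alpha> ?B p q = inc_add (inc_mult ?B (b \<alpha> ?E)) (inc_mult (b \<alpha> ?B) ?E) p q" by simp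
  then show ?thesis using assms unfolding inc_add_def mult_su_left[OF fin] mult_su_right[OF fin] by auto
qed

lemma R4:
  assumes "d \<le> g" "\<alpha> \<in> incidence" "p \<noteq> d"
  shows "b \<alpha> (scaled_unit s d g) p q = (if q = g \<and> p \<le> d then b \<alpha> (scaled_unit 1 d d) p d * s else 0)"
proof -
  let ?B = "scaled_unit s d g" and ?E = "scaled_unit 1 d d"
  have "b \<alpha> ?B = b \<alpha> (inc_mult ?E ?B)" using su_left_id[OF lf assms(1), where r=s] by simp
  also have "\<dots> = inc_add (inc_mult ?E (b \<alpha> ?B)) (inc_mult (b \<alpha> ?E) ?B)"
    using bd assms su_inc[OF assms(1)] su_inc[of d d] unfolding additive_biderivation_def by blast
  finally have "b \<alpha> ?B p q = inc_add (inc_mult ?E (b \<alpha> ?B)) (inc_mult (b \<alpha> ?E) ?B) p q" by simp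
  then show ?thesis using assms unfolding inc_add_def mult_su_left[OF fin] mult_su_right[OF fin] by auto
qed

lemma L2:
  assumes "d \<le> g" "\<alpha> \<in> incidence" "b \<alpha> (scaled_unit s d g) p q \<noteq> 0"
  shows "(p = d \<and> g \<le> q) \<or> (q = g \<and> p \<le> d)"
proof (cases "q = g")
  case True
  then show ?thesis
  proof (cases "p = d")
    case False
    then show ?thesis using R4[OF assms(1,2) False, of s q] assms(3) by (auto split: if_splits)
  qed (use assms in auto)
next
  case False
  then show ?thesis using R3[OF assms(1,2) False, of s p] assms(3) by (auto split: if_splits)
qed

end

theorem mainTheorem9:
  fixes b :: "('p::order \<Rightarrow> 'p \<Rightarrow> 'r::comm_ring_1) \<Rightarrow> ('p \<Rightarrow> 'p \<Rightarrow> 'r) \<Rightarrow> ('p \<Rightarrow> 'p \<Rightarrow> 'r)"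
    and x y u v :: 'p
  assumes "locally_finite_poset TYPE('p)"
    and "additive_biderivation b"
    and "x \<le> y" and "u \<le> v"
    and "\<exists>a\<in>{x, y, u, v}. \<exists>c\<in>{x, y, u, v}. \<not> a \<le> c \<and> \<not> c \<le> a"
  shows "\<forall>r1 r2 :: 'r. b (scaled_unit r1 x y) (scaled_unit r2 u v) = (\<lambda>_ _. 0)"
proof (intro allI ext)
  fix r1 r2 :: 'r and p q :: 'p
  note lf = assms(1) and bd = assms(2)
  have inc: "scaled_unit r2 u v \<in> (incidence :: ('p \<Rightarrow> 'p \<Rightarrow> 'r) set)" using su_inc assms(4) .
  have eyy: "scaled_unit 1 y y \<in> (incidence :: ('p \<Rightarrow> 'p \<Rightarrow> 'r) set)" by (rule su_inc) simp
  have exx: "scaled_unit 1 x x \<in> (incidence :: ('p \<Rightarrow> 'p \<Rightarrow> 'r) set)" by (rule su_inc) simp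
  have incA: "scaled_unit r1 x y \<in> (incidence :: ('p \<Rightarrow> 'p \<Rightarrow> 'r) set)" using su_inc assms(3) .
  have nc: "\<not> (y = u \<or> v = x \<or> (x = u \<and> v \<le> y) \<or> (y = v \<and> x \<le> u) \<or> (y \<le> u) \<or> (v \<le> x)
     \<or> (x = v) \<or> (y = u))"
    using assms(3,4,5) by (auto intro: order_trans)
  show "b (scaled_unit r1 x y) (scaled_unit r2 u v) p q = 0"
  proof (cases "p = x")
    case px: True
    show ?thesis
    proof (cases "q = y")
      case True
      show ?thesis
      proof (rule ccontr)
        assume "b (scaled_unit r1 x y) (scaled_unit r2 u v) p q \<noteq> 0"
        from L2[OF lf bd assms(4) incA this] px True nc show False by auto
      qed
    next
      case False
      have "b (scaled_unit r1 x y) (scaled_unit r2 u v) p q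
          = (if p = x \<and> y \<le> q then r1 * b (scaled_unit 1 y y) (scaled_unit r2 u v) y q else 0)"
        by (rule R1[OF lf bd assms(3) inc False])
      moreover have "b (scaled_unit 1 y y) (scaled_unit r2 u v) y q = 0"
      proof (rule ccontr)
        assume "b (scaled_unit 1 y y) (scaled_unit r2 u v) y q \<noteq> 0"
        from L2[OF lf bd assms(4) eyy this] nc show False by auto
      qed
      ultimately show ?thesis by simp
    qed
  next
    case False
    have "b (scaled_unit r1 x y) (scaled_unit r2 u v) p q
        = (if q = y \<and> p \<le> x then b (scaled_unit 1 x x) (scaled_unit r2 u v) p x * r1 else 0)"
      by (rule R2[OF lf bd assms(3) inc False])
    moreover have "b (scaled_unit 1 x x) (scaled_unit r2 u v) p x = 0"
    proof (rule ccontr)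
      assume "b (scaled_unit 1 x x) (scaled_unit r2 u v) p x \<noteq> 0"
      from L2[OF lf bd assms(4) exx this] nc show False by auto
    qed
    ultimately show ?thesis by simp
  qed
qed

end
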